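(* Let $C>0$, $L>0$, $R>0$, $\nu\in\mathbb{R}$, $h>0$ and let $\hat \varphi:\mathbb{R}\to\mathbb{R}$ be any function. Suppose real sequences $v_{C,k},i_{C,k},i_{L,k},v_{L,k},v_{R,k},i_{R,k},v_{M,k},i_{M,k},q_{M,k}$, $k=0,1,2,\dots$, satisfy for all $k$: $$i_{C,k}=C\frac{v_{C,k+1}-v_{C,k}}{h},\quad v_{L,k}=L\frac{i_{L,k+1}-i_{L,k}}{h},\quad v_{R,k}=Ri_{R,k},$$ $$v_{M,k}=\frac{\hat \varphi(q_{M,k+1})-\hat \varphi(q_{M,k})}{h},\quad q_{M,k+1}=q_{M,k}+hi_{M,k},$$ $$v_{C,k}=v_{L,k}+v_{M,k},\quad v_{C,k}=v_{R,k},\quad i_{L,k}+i_{R,k}+i_{C,k}-\nu i_{L,k}=0,\quad i_{L,k}=i_{M,k}.$$ Then: 1) $(i_{L,k},v_{C,k},q_{M,k})$ is an orbit of the three-dimensional map $$\begin{aligned} i_{L,k+1}&=i_{L,k}-\tfrac{1}{L}\big(\hat \varphi(q_{M,k}+hi_{L,k})-\hat \varphi(q_{M,k})\big)+\tfrac{h}{L}v_{C,k},\\ v_{C,k+1}&=\big(1-\tfrac{h}{RC}\big)v_{C,k}+\tfrac{h}{C}(\nu-1)i_{L,k},\\ q_{M,k+1}&=q_{M,k}+hi_{L,k}.\end{aligned}$$ 2) For any step size $h>0$, the function $\Theta_{DMLC}(v_C,i_L,q_M)=RCv_C+Li_L+\hat\varphi(q_M)+R(1-\nu)q_M$ is a first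 integral of this map, i.e. it takes the same value at $k+1$ as at $k$ for all $k\ge0$ along every orbit. 3) Consequently $\mathbb{R}^3$ is foliated into the invariant sets $\mathcal{M}_{DMLC}(\Phi_0)=\{(v_C,i_L,q_M)\in\mathbb{R}^3:\Theta_{DMLC}(v_C,i_L,q_M)=\Phi_0\}$, $\Phi_0\in\mathbb{R}$, and along any orbit of the map lying in $\mathcal{M}_{DMLC}(\Phi_0)$, setting $\varphi^0_{C,k}=h\sum_{j=0}^{k-1}v_{C,j}$ and $y_k=\varphi^0_{C,k}+R(\nu-1)q_{M,0}-CRv_{C,0}$, the pair $(q_{M,k},y_k)$ obeys the two-dimensional map $$q_{M,k+1}=q_{M,k}+\tfrac{h}{L}y_k-\tfrac{h}{L}\hat\varphi(q_{M,k})+\tfrac{h}{L}\Phi_0,\qquad y_{k+1}=\big(1-\tfrac{h}{RC}\big)y_k+\tfrac{h}{C}(\nu-1)q_{M,k}.$$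
   Context: These equations model the dual of a discrete-time memristor Murali-Lakshmanan-Chua circuit: an inductor $L$ in series with a charge-controlled memristor $\varphi_M=\hat\varphi(q_M)$, connected in parallel with a resistor $R$, a capacitor $C$ and a current-controlled current source of value $\nu i_L$, discretized with step size $h$. The quantity $\varphi^0_{C,k}$ is the (discrete) incremental flux of the capacitor. *)

theory Defs
  imports Complex_Main
begin

definition dmlc_map ::
  "real \<Rightarrow> real \<Rightarrow> real \<Rightarrow> real \<Rightarrow> real \<Rightarrow> (real \<Rightarrow> real) \<Rightarrow>
   real \<times> real \<times> real \<Rightarrow> real \<times> real \<times> real" where
  "dmlc_map C L R \<nu> h \<phi> = (\<lambda>(iL, vC, qM).
     (iL - (1 / L) * (\<phi> (qM + h * iL) - \<phi> qM) + (h / L) * vC,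
      (1 - h / (R * C)) * vC + (h / C) * (\<nu> - 1) * iL,
      qM + h * iL))"

definition Theta_DMLC ::
  "real \<Rightarrow> real \<Rightarrow> real \<Rightarrow> real \<Rightarrow> (real \<Rightarrow> real) \<Rightarrow> real \<Rightarrow> real \<Rightarrow> real \<Rightarrow> real" where
  "Theta_DMLC C L R \<nu> \<phi> vC iL qM = R * C * vC + L * iL + \<phi> qM + R * (1 - \<nu>) * qM"

definition M_DMLC ::
  "real \<Rightarrow> real \<Rightarrow> real \<Rightarrow> real \<Rightarrow> (real \<Rightarrow> real) \<Rightarrow> real \<Rightarrow> (real \<times> real \<times> real) set" where
  "M_DMLC C L R \<nu> \<phi> \<Phi>0 = {(vC, iL, qM). Theta_DMLC C L R \<nu> \<phi> vC iL qM = \<Phi>0}"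

end

theory Submission
  imports Defs
begin

theorem proposition4:
  fixes C L R \<nu> h :: real
    and \<phi> :: "real \<Rightarrow> real"
    and vC iC iL vL vR iR vM iM qM :: "nat \<Rightarrow> real"
  assumes hC: "C > 0" and hL: "L > 0" and hR: "R > 0" and hh: "h > 0"
    and eC: "\<And>k. iC k = C * (vC (Suc k) - vC k) / h"
    and eL: "\<And>k. vL k = L * (iL (Suc k) - iL k) / h"
    and eR: "\<And>k. vR k = R * iR k"
    and eM: "\<And>k. vM k = (\<phi> (qM (Suc k)) - \<phi> (qM k)) / h"
    and eq: "\<And>k. qM (Suc k) = qM k + h * iM k"
    and k1: "\<And>k. vC k = vL k + vM k"
    and k2: "\<And>k. vC k = vR k"
    and k3: "\<And>k. iL k + iR k + iC k - \<nu> * iL k = 0"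
    and k4: "\<And>k. iL k = iM k"
  shows
    \<comment> \<open>1) orbit of the three-dimensional map\<close>
    "(\<forall>k. (iL (Suc k), vC (Suc k), qM (Suc k)) = dmlc_map C L R \<nu> h \<phi> (iL k, vC k, qM k))
     \<comment> \<open>2) Theta is a first integral of the map, and is conserved along the orbit\<close>
     \<and> (\<forall>i v q. (case dmlc_map C L R \<nu> h \<phi> (i, v, q) of (i', v', q') \<Rightarrow>
               Theta_DMLC C L R \<nu> \<phi> v' i' q') = Theta_DMLC C L R \<nu> \<phi> v i q)
     \<and> (\<forall>k. Theta_DMLC C L R \<nu> \<phi> (vC (Suc k)) (iL (Suc k)) (qM (Suc k))
            = Theta_DMLC C L R \<nu> \<phi> (vC k) (iL k) (qM k))
     \<comment> \<open>3a) R^3 is foliated into the invariant level sets\<close>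
     \<and> (\<forall>p :: real \<times> real \<times> real. \<exists>!\<Phi>0. p \<in> M_DMLC C L R \<nu> \<phi> \<Phi>0)
     \<and> (\<forall>\<Phi>0 i v q. (v, i, q) \<in> M_DMLC C L R \<nu> \<phi> \<Phi>0 \<longrightarrow>
          (case dmlc_map C L R \<nu> h \<phi> (i, v, q) of (i', v', q') \<Rightarrow>
             (v', i', q') \<in> M_DMLC C L R \<nu> \<phi> \<Phi>0))
     \<comment> \<open>3b) reduction to the two-dimensional map along orbits in M(Phi0)\<close>
     \<and> (\<forall>\<Phi>0. (\<forall>k. (vC k, iL k, qM k) \<in> M_DMLC C L R \<nu> \<phi> \<Phi>0) \<longrightarrow>
          (let y = (\<lambda>k. h * (\<Sum>j<k. vC j) + R * (\<nu> - 1) * qM 0 - C * R * vC 0) in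
           \<forall>k. qM (Suc k) = qM k + (h / L) * y k - (h / L) * \<phi> (qM k) + (h / L) * \<Phi>0
             \<and> y (Suc k) = (1 - h / (R * C)) * y k + (h / C) * (\<nu> - 1) * qM k))"
proof -
  have qs: "qM (Suc k) = qM k + h * iL k" for k using eq k4 by simp
  have iLs: "iL (Suc k) = iL k - (1 / L) * (\<phi> (qM k + h * iL k) - \<phi> (qM k)) + (h / L) * vC k" for k
  proof -
    have "vL k = vC k - vM k" using k1 by simp
    hence "L * (iL (Suc k) - iL k) / h = vC k - (\<phi> (qM k + h * iL k) - \<phi> (qM k)) / h"
      using eL eM qs by simp
    thus ?thesis using hL hh by (simp add: field_simps)
  qed
  have vs: "vC (Suc k) = (1 - h / (R * C)) * vC k + (h / C) * (\<nu> - 1) * iL k" for k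
  proof -
    have "iC k = (\<nu> - 1) * iL k - vC k / R" using k3[of k] k2[of k] eR[of k] hR
      by (simp add: field_simps)
    hence "C * (vC (Suc k) - vC k) / h = (\<nu> - 1) * iL k - vC k / R" using eC by simp
    thus ?thesis using hC hh hR apply (simp add: field_simps)
      apply (drule arg_cong[where f="\<lambda>x. C * x"]) by (simp add: algebra_simps)
  qed
  have P1: "\<forall>k. (iL (Suc k), vC (Suc k), qM (Suc k)) = dmlc_map C L R \<nu> h \<phi> (iL k, vC k, qM k)"
    using iLs vs qs by (simp add: dmlc_map_def)
  have P2: "\<forall>i v q. (case dmlc_map C L R \<nu> h \<phi> (i, v, q) of (i', v', q') \<Rightarrow>
               Theta_DMLC C L R \<nu> \<phi> v' i' q') = Theta_DMLC C L R \<nu> \<phi> v i q"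
    using hC hL hR by (simp add: dmlc_map_def Theta_DMLC_def field_simps)
  have P3: "\<forall>k. Theta_DMLC C L R \<nu> \<phi> (vC (Suc k)) (iL (Suc k)) (qM (Suc k))
            = Theta_DMLC C L R \<nu> \<phi> (vC k) (iL k) (qM k)"
  proof
    fix k
    have "(case dmlc_map C L R \<nu> h \<phi> (iL k, vC k, qM k) of (i', v', q') \<Rightarrow>
               Theta_DMLC C L R \<nu> \<phi> v' i' q') = Theta_DMLC C L R \<nu> \<phi> (vC k) (iL k) (qM k)"
      using P2 by blast
    thus "Theta_DMLC C L R \<nu> \<phi> (vC (Suc k)) (iL (Suc k)) (qM (Suc k))
            = Theta_DMLC C L R \<nu> \<phi> (vC k) (iL k) (qM k)"
      using P1 by (metis (no_types, lifting) case_prod_conv)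
  qed
  have P4: "\<forall>p :: real \<times> real \<times> real. \<exists>!\<Phi>0. p \<in> M_DMLC C L R \<nu> \<phi> \<Phi>0"
    by (auto simp: M_DMLC_def)
  have P5: "\<forall>\<Phi>0 i v q. (v, i, q) \<in> M_DMLC C L R \<nu> \<phi> \<Phi>0 \<longrightarrow>
          (case dmlc_map C L R \<nu> h \<phi> (i, v, q) of (i', v', q') \<Rightarrow>
             (v', i', q') \<in> M_DMLC C L R \<nu> \<phi> \<Phi>0)"
  proof (intro allI impI)
    fix \<Phi>0 i v q
    assume a: "(v, i, q) \<in> M_DMLC C L R \<nu> \<phi> \<Phi>0"
    obtain i' v' q' where d: "dmlc_map C L R \<nu> h \<phi> (i, v, q) = (i', v', q')"
      by (metis prod_cases3)
    have "Theta_DMLC C L R \<nu> \<phi> v' i' q' = Theta_DMLC C L R \<nu> \<phi> v i q"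
      using P2 d by (metis (no_types, lifting) case_prod_conv)
    thus "case dmlc_map C L R \<nu> h \<phi> (i, v, q) of (i', v', q') \<Rightarrow>
             (v', i', q') \<in> M_DMLC C L R \<nu> \<phi> \<Phi>0" using a d by (simp add: M_DMLC_def)
  qed
  define y where "y = (\<lambda>k. h * (\<Sum>j<k. vC j) + R * (\<nu> - 1) * qM 0 - C * R * vC 0)"
  have yk: "y k = - R * C * vC k + R * (\<nu> - 1) * qM k" for k
  proof (induction k)
    case 0 then show ?case by (simp add: y_def)
  next
    case (Suc k)
    have "y (Suc k) = y k + h * vC k" by (simp add: y_def algebra_simps)
    also have "\<dots> = - R * C * vC (Suc k) + R * (\<nu> - 1) * qM (Suc k)"
    proof -
      have e: "R * C * vC (Suc k) = R * C * vC k - h * vC k + R * h * (\<nu> - 1) * iL k"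
        unfolding vs using hR hC by (simp add: field_simps)
      show ?thesis unfolding Suc qs using e by (simp add: algebra_simps)
    qed
    finally show ?case .
  qed
  have P6: "\<forall>\<Phi>0. (\<forall>k. (vC k, iL k, qM k) \<in> M_DMLC C L R \<nu> \<phi> \<Phi>0) \<longrightarrow>
          (\<forall>k. qM (Suc k) = qM k + (h / L) * y k - (h / L) * \<phi> (qM k) + (h / L) * \<Phi>0
             \<and> y (Suc k) = (1 - h / (R * C)) * y k + (h / C) * (\<nu> - 1) * qM k)"
  proof (intro allI impI conjI)
    fix \<Phi>0 k
    assume a: "\<forall>k. (vC k, iL k, qM k) \<in> M_DMLC C L R \<nu> \<phi> \<Phi>0"
    hence t: "\<Phi>0 = R * C * vC k + L * iL k + \<phi> (qM k) + R * (1 - \<nu>) * qM k"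
      by (simp add: M_DMLC_def Theta_DMLC_def)
    show "qM (Suc k) = qM k + (h / L) * y k - (h / L) * \<phi> (qM k) + (h / L) * \<Phi>0"
      unfolding qs yk t using hL by (simp add: field_simps)
    show "y (Suc k) = (1 - h / (R * C)) * y k + (h / C) * (\<nu> - 1) * qM k"
    proof -
      have "y (Suc k) = y k + h * vC k" by (simp add: y_def algebra_simps)
      moreover have "vC k = (- y k + R * (\<nu> - 1) * qM k) / (R * C)"
        using yk[of k] hR hC by (simp add: field_simps)
      ultimately show ?thesis using hR hC apply (simp add: field_simps)
        apply (drule arg_cong[where f="\<lambda>x. C * x"]) by (simp add: algebra_simps)
    qed
  qed
  show ?thesis using P1 P2 P3 P4 P5 P6 unfolding y_def Let_def by blast
qed

end
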